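(* Let $M_1$ and $M_2$ be uniformly dense matroids on the same finite ground set $E$. Then their intersection $M_1\wedge M_2$ is a uniformly dense matroid on $E$.
   Context: For a matroid $M=(E,\mathcal{B})$, the dual is $M^\star=(E,\{E\setminus B: B\in\mathcal{B}\})$. The union of matroids $M_1=(E,\mathcal{B}_1)$, $M_2=(E,\mathcal{B}_2)$ is the matroid on $E$ whose bases are the inclusion-maximal sets among $\{B_1\cup B_2: B_1\in\mathcal{B}_1,B_2\in\mathcal{B}_2\}$. The intersection is $M_1\wedge M_2=(M_1^\star\vee M_2^\star)^\star$. With $\operatorname{rank}(A)=\max_B|A\cap B|$ and $\rho(A)=|A|/\operatorname{rank}(A)$, a matroid is uniformly dense if $\rho(A)\le\rho(E)$ for all nonempty $A\subseteq E$ (matroids assumed loopless). *)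

theory Defs
  imports Main "HOL-Library.Extended_Real"
begin

definition matroid :: "'a set \<Rightarrow> 'a set set \<Rightarrow> bool" where
  "matroid E \<B> \<longleftrightarrow> finite E \<and> \<B> \<noteq> {} \<and> (\<forall>X\<in>\<B>. X \<subseteq> E) \<and>
     (\<forall>B1\<in>\<B>. \<forall>B2\<in>\<B>. \<forall>x\<in>B1 - B2. \<exists>y\<in>B2 - B1. insert y (B1 - {x}) \<in> \<B>)"

definition dual_bases :: "'a set \<Rightarrow> 'a set set \<Rightarrow> 'a set set" where
  "dual_bases E \<B> = (\<lambda>X. E - X) ` \<B>"

definition union_bases :: "'a set set \<Rightarrow> 'a set set \<Rightarrow> 'a set set" where
  "union_bases \<B>1 \<B>2 =
     (let U = {B1 \<union> B2 | B1 B2. B1 \<in> \<B>1 \<and> B2 \<in> \<B>2}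
      in {X \<in> U. \<not> (\<exists>Y\<in>U. X \<subset> Y)})"

definition inter_bases :: "'a set \<Rightarrow> 'a set set \<Rightarrow> 'a set set \<Rightarrow> 'a set set" where
  "inter_bases E \<B>1 \<B>2 = dual_bases E (union_bases (dual_bases E \<B>1) (dual_bases E \<B>2))"

definition mrank :: "'a set set \<Rightarrow> 'a set \<Rightarrow> nat" where
  "mrank \<B> A = Max ((\<lambda>B. card (A \<inter> B)) ` \<B>)"

definition density :: "'a set set \<Rightarrow> 'a set \<Rightarrow> ereal" where
  "density \<B> A = (if mrank \<B> A = 0 then \<infinity> else ereal (real (card A) / real (mrank \<B> A)))"

definition loopless :: "'a set \<Rightarrow> 'a set set \<Rightarrow> bool" where
  "loopless E \<B> \<longleftrightarrow> (\<forall>e\<in>E. mrank \<B> {e} > 0)"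

definition uniformly_dense :: "'a set \<Rightarrow> 'a set set \<Rightarrow> bool" where
  "uniformly_dense E \<B> \<longleftrightarrow> (\<forall>A. A \<subseteq> E \<and> A \<noteq> {} \<longrightarrow> density \<B> A \<le> density \<B> E)"

end

theory Submission
  imports Defs
begin

definition rankf :: "'a set \<Rightarrow> ('a set \<Rightarrow> nat) \<Rightarrow> bool" where
  "rankf G r \<longleftrightarrow> finite G \<and> (\<forall>X. X \<subseteq> G \<longrightarrow> r X \<le> card X) \<and>
     (\<forall>X Y. X \<subseteq> Y \<and> Y \<subseteq> G \<longrightarrow> r X \<le> r Y) \<and>
     (\<forall>X Y. X \<subseteq> G \<and> Y \<subseteq> G \<longrightarrow> r (X \<union> Y) + r (X \<inter> Y) \<le> r X + r Y)"

lemma rankfD: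
  assumes "rankf G r"
  shows "finite G" "X \<subseteq> G \<Longrightarrow> r X \<le> card X" "X \<subseteq> Y \<Longrightarrow> Y \<subseteq> G \<Longrightarrow> r X \<le> r Y"
    "X \<subseteq> G \<Longrightarrow> Y \<subseteq> G \<Longrightarrow> r (X \<union> Y) + r (X \<inter> Y) \<le> r X + r Y"
  using assms unfolding rankf_def by blast+

lemma rankf_empty: "rankf G r \<Longrightarrow> r {} = 0"
  using rankfD(2)[of G r "{}"] by simp

lemma rankf_subadd: "rankf G r \<Longrightarrow> X \<subseteq> G \<Longrightarrow> Y \<subseteq> G \<Longrightarrow> r (X \<union> Y) \<le> r X + r Y"
  using rankfD(4)[of G r X Y] by simp

lemma rankf_insert: "rankf G r \<Longrightarrow> X \<subseteq> G \<Longrightarrow> x \<in> G \<Longrightarrow> r (insert x X) \<le> r X + 1"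
  using rankf_subadd[of G r "{x}" X] rankfD(2)[of G r "{x}"] by simp

lemma rankf_sub: "rankf G r \<Longrightarrow> G' \<subseteq> G \<Longrightarrow> rankf G' r"
  unfolding rankf_def by (meson finite_subset order_trans)

lemma rankf_indep_subset:
  assumes "rankf G r" "X \<subseteq> G" "r X = card X" "Y \<subseteq> X"
  shows "r Y = card Y"
proof -
  have fX: "finite X" using assms rankfD(1) finite_subset by blast
  have "r X \<le> r Y + r (X - Y)" using rankf_subadd[of G r Y "X - Y"] assms
    by (metis Diff_partition Diff_subset order_trans)
  moreover have "r (X - Y) \<le> card (X - Y)" using assms rankfD(2) by blast
  moreover have "card X = card Y + card (X - Y)" using fX assms(4)
    by (metis card_Diff_subset card_mono finite_subset le_add_diff_inverse)
  moreover have "r Y \<le> card Y" using assms rankfD(2) by blast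
  ultimately show ?thesis using assms(3) by linarith
qed

lemma rankf_closure:
  assumes "rankf G r" "S \<subseteq> G" "Y \<subseteq> G" "\<forall>y\<in>Y. r (insert y S) = r S"
  shows "r (S \<union> Y) = r S"
proof -
  have fY: "finite Y" using assms rankfD(1) finite_subset by blast
  have "Y \<subseteq> G \<longrightarrow> (\<forall>y\<in>Y. r (insert y S) = r S) \<longrightarrow> r (S \<union> Y) \<le> r S"
    using fY
  proof (induction Y rule: finite_induct)
    case empty then show ?case by simp
  next
    case (insert y Y)
    show ?case
    proof (intro impI)
      assume a: "insert y Y \<subseteq> G" "\<forall>z\<in>insert y Y. r (insert z S) = r S"
      have ih: "r (S \<union> Y) \<le> r S" using insert a by auto
      have sm: "r ((S \<union> Y) \<union> insert y S) + r ((S \<union> Y) \<inter> insert y S) \<le> r (S \<union> Y) + r (insert y S)"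
        using rankfD(4)[OF assms(1), of "S \<union> Y" "insert y S"] a assms(2) by auto
      have "r S \<le> r ((S \<union> Y) \<inter> insert y S)"
        using rankfD(3)[OF assms(1), of S "(S \<union> Y) \<inter> insert y S"] a assms(2) by auto
      moreover have "(S \<union> Y) \<union> insert y S = S \<union> insert y Y" by auto
      ultimately show "r (S \<union> insert y Y) \<le> r S" using sm ih a by auto
    qed
  qed
  then have "r (S \<union> Y) \<le> r S" using assms by blast
  moreover have "r S \<le> r (S \<union> Y)" using rankfD(3)[OF assms(1)] assms by auto
  ultimately show ?thesis by linarith
qed

lemma rankf_extend:
  assumes "rankf G r" "A \<subseteq> G" "I \<subseteq> A" "r I = card I"
  shows "\<exists>J. I \<subseteq> J \<and> J \<subseteq> A \<and> r J = card J \<and> r J = r A"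
proof -
  have fA: "finite A" using assms rankfD(1) finite_subset by blast
  let ?P = "\<lambda>J. I \<subseteq> J \<and> J \<subseteq> A \<and> r J = card J"
  obtain J where J: "?P J" and Jm: "\<forall>J'. ?P J' \<longrightarrow> card A - card J \<le> card A - card J'"
    using ex_has_least_nat[of ?P I "\<lambda>J. card A - card J"] assms by blast
  have JG: "J \<subseteq> G" using J assms by blast
  have "\<forall>y\<in>A - J. r (insert y J) = r J"
  proof
    fix y assume y: "y \<in> A - J"
    have le: "r (insert y J) \<le> r J + 1" using rankf_insert[OF assms(1) JG] y assms(2) by blast
    have ge: "r J \<le> r (insert y J)" using rankfD(3)[OF assms(1), of J "insert y J"] y assms(2) J by auto
    have fJ: "finite J" using J fA finite_subset by blast
    have cJ: "card (insert y J) = card J + 1" using y fJ by simp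
    have "card (insert y J) \<le> card A" using y J fA by (simp add: card_mono)
    show "r (insert y J) = r J"
    proof (rule ccontr)
      assume "r (insert y J) \<noteq> r J"
      then have "r (insert y J) = card (insert y J)" using le ge J cJ by linarith
      then have "?P (insert y J)" using J y by auto
      then have "card A - card J \<le> card A - card (insert y J)" using Jm by blast
      then show False using cJ \<open>card (insert y J) \<le> card A\<close> by linarith
    qed
  qed
  then have "r (J \<union> (A - J)) = r J" using rankf_closure[OF assms(1) JG, of "A - J"] assms by blast
  moreover have "J \<union> (A - J) = A" using J by blast
  ultimately show ?thesis using J by auto
qed

lemma rankf_contract:
  assumes "rankf G r" "e \<in> G" "r {e} = 1"
  shows "rankf (G - {e}) (\<lambda>X. r (insert e X) - 1)"
proof -
  have pos: "\<And>X. X \<subseteq> G - {e} \<Longrightarrow> 1 \<le> r (insert e X)"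
    using rankfD(3)[OF assms(1), of "{e}"] assms by (metis insert_subset empty_subsetI insert_mono Diff_subset order_trans)
  show ?thesis unfolding rankf_def
  proof (intro conjI allI impI)
    show "finite (G - {e})" using rankfD(1)[OF assms(1)] by simp
  next
    fix X assume X: "X \<subseteq> G - {e}"
    have "r (insert e X) \<le> r X + 1" using rankf_insert[OF assms(1), of X e] X assms by auto
    moreover have "r X \<le> card X" using rankfD(2)[OF assms(1)] X by auto
    ultimately show "r (insert e X) - 1 \<le> card X" by linarith
  next
    fix X Y assume "X \<subseteq> Y \<and> Y \<subseteq> G - {e}"
    then have "r (insert e X) \<le> r (insert e Y)"
      using rankfD(3)[OF assms(1), of "insert e X" "insert e Y"] assms(2) by blast
    then show "r (insert e X) - 1 \<le> r (insert e Y) - 1" by (rule diff_le_mono)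
  next
    fix X Y assume a: "X \<subseteq> G - {e} \<and> Y \<subseteq> G - {e}"
    have "r (insert e X \<union> insert e Y) + r (insert e X \<inter> insert e Y) \<le> r (insert e X) + r (insert e Y)"
      using rankfD(4)[OF assms(1), of "insert e X" "insert e Y"] a assms(2) by auto
    moreover have "insert e X \<union> insert e Y = insert e (X \<union> Y)" "insert e X \<inter> insert e Y = insert e (X \<inter> Y)" by auto
    ultimately have sm: "r (insert e (X \<union> Y)) + r (insert e (X \<inter> Y)) \<le> r (insert e X) + r (insert e Y)" by simp
    have "1 \<le> r (insert e (X \<union> Y))" "1 \<le> r (insert e (X \<inter> Y))" "1 \<le> r (insert e X)" "1 \<le> r (insert e Y)"
      using pos[of "X \<union> Y"] pos[of "X \<inter> Y"] pos[of X] pos[of Y] a by auto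
    then show "r (insert e (X \<union> Y)) - 1 + (r (insert e (X \<inter> Y)) - 1) \<le> r (insert e X) - 1 + (r (insert e Y) - 1)"
      using sm by linarith
  qed
qed

lemma matroid_intersection_aux:
  assumes "finite G"
  shows "\<forall>r1 r2 k. rankf G r1 \<longrightarrow> rankf G r2 \<longrightarrow> (\<forall>A\<subseteq>G. k \<le> r1 A + r2 (G - A)) \<longrightarrow>
           (\<exists>I\<subseteq>G. r1 I = card I \<and> r2 I = card I \<and> k \<le> card I)"
  using assms
proof (induction G rule: finite_induct)
  case empty
  show ?case
  proof (intro allI impI)
    fix r1 r2 :: "'a set \<Rightarrow> nat" and k
    assume r1: "rankf {} r1" and r2: "rankf {} r2" and h: "\<forall>A\<subseteq>{}. k \<le> r1 A + r2 ({} - A)"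
    have "k \<le> 0" using h[rule_format, of "{}"] rankf_empty[OF r1] rankf_empty[OF r2] by simp
    then show "\<exists>I\<subseteq>{}. r1 I = card I \<and> r2 I = card I \<and> k \<le> card I"
      using rankf_empty[OF r1] rankf_empty[OF r2] by auto
  qed
next
  case (insert e F)
  show ?case
  proof (intro allI impI)
    fix r1 r2 :: "'a set \<Rightarrow> nat" and k
    let ?G = "insert e F"
    assume r1: "rankf ?G r1" and r2: "rankf ?G r2" and h: "\<forall>A\<subseteq>?G. k \<le> r1 A + r2 (?G - A)"
    have r1F: "rankf F r1" and r2F: "rankf F r2" using rankf_sub r1 r2 by blast+
    show "\<exists>I\<subseteq>?G. r1 I = card I \<and> r2 I = card I \<and> k \<le> card I"
    proof (cases "\<forall>A\<subseteq>F. k \<le> r1 A + r2 (F - A)")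
      case True
      then obtain I where "I \<subseteq> F" "r1 I = card I" "r2 I = card I" "k \<le> card I"
        using insert.IH[rule_format, OF r1F r2F, of k] True by blast
      then show ?thesis by blast
    next
      case False
      then obtain A where A: "A \<subseteq> F" "r1 A + r2 (F - A) < k" by (auto simp: not_le)
      have eF: "e \<notin> F" by fact
      have AG: "A \<subseteq> ?G" using A by auto
      have e1: "r1 {e} = 1"
      proof (rule ccontr)
        assume "r1 {e} \<noteq> 1"
        then have "r1 {e} = 0" using rankfD(2)[OF r1, of "{e}"] by auto
        moreover have "r1 (A \<union> {e}) \<le> r1 A + r1 {e}" using rankf_subadd[OF r1 AG, of "{e}"] by auto
        moreover have "k \<le> r1 (A \<union> {e}) + r2 (?G - (A \<union> {e}))" using h[rule_format, of "A \<union> {e}"] AG by blast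
        moreover have "?G - (A \<union> {e}) = F - A" using eF by auto
        ultimately show False using A by auto
      qed
      have e2: "r2 {e} = 1"
      proof (rule ccontr)
        assume "r2 {e} \<noteq> 1"
        then have "r2 {e} = 0" using rankfD(2)[OF r2, of "{e}"] by auto
        moreover have "r2 ((F - A) \<union> {e}) \<le> r2 (F - A) + r2 {e}" using rankf_subadd[OF r2, of "F - A" "{e}"] by auto
        moreover have "k \<le> r1 A + r2 (?G - A)" using h[rule_format, of A] AG by blast
        moreover have "?G - A = (F - A) \<union> {e}" using A eF by auto
        ultimately show False using A by auto
      qed
      let ?c1 = "\<lambda>X. r1 (insert e X) - 1" and ?c2 = "\<lambda>X. r2 (insert e X) - 1"
      have GeF: "?G - {e} = F" using eF by auto
      have c1: "rankf F ?c1" using rankf_contract[OF r1 insertI1 e1] GeF by simp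
      have c2: "rankf F ?c2" using rankf_contract[OF r2 insertI1 e2] GeF by simp
      show ?thesis
      proof (cases "\<forall>B\<subseteq>F. k - 1 \<le> ?c1 B + ?c2 (F - B)")
        case True
        then obtain I where I: "I \<subseteq> F" "?c1 I = card I" "?c2 I = card I" "k - 1 \<le> card I"
          using insert.IH[rule_format, OF c1 c2, of "k - 1"] True by blast
        have p1: "1 \<le> r1 (insert e I)" using rankfD(3)[OF r1, of "{e}" "insert e I"] e1 I by auto
        have p2: "1 \<le> r2 (insert e I)" using rankfD(3)[OF r2, of "{e}" "insert e I"] e2 I by auto
        have fI: "finite I" using I(1) insert.hyps(1) finite_subset by blast
        have eI: "e \<notin> I" using I(1) eF by blast
        have cI: "card (insert e I) = card I + 1" using fI eI by simp
        show ?thesis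
          apply (rule exI[of _ "insert e I"])
          using I p1 p2 cI by auto
      next
        case False
        then obtain B where B: "B \<subseteq> F" "?c1 B + ?c2 (F - B) < k - 1" by (auto simp: not_le)
        have q1: "1 \<le> r1 (insert e B)" using rankfD(3)[OF r1, of "{e}" "insert e B"] e1 B by auto
        have q2: "1 \<le> r2 (insert e (F - B))" using rankfD(3)[OF r2, of "{e}" "insert e (F - B)"] e2 B by auto
        have Bk: "r1 (insert e B) + r2 (?G - B) \<le> k"
        proof -
          have "?G - B = insert e (F - B)" using B eF by auto
          then show ?thesis using B q1 q2 by simp
        qed
        have s1: "r1 (A \<union> insert e B) + r1 (A \<inter> insert e B) \<le> r1 A + r1 (insert e B)"
          using rankfD(4)[OF r1, of A "insert e B"] A B by auto
        have s2: "r2 ((F - A) \<union> (?G - B)) + r2 ((F - A) \<inter> (?G - B)) \<le> r2 (F - A) + r2 (?G - B)"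
          using rankfD(4)[OF r2, of "F - A" "?G - B"] by auto
        have e1': "A \<inter> insert e B = A \<inter> B" using eF A by auto
        have e2': "(F - A) \<union> (?G - B) = ?G - (A \<inter> B)" using eF A B by auto
        have e3': "(F - A) \<inter> (?G - B) = ?G - (A \<union> insert e B)" using eF A B by auto
        have h1: "k \<le> r1 (A \<inter> B) + r2 (?G - (A \<inter> B))" using h[rule_format, of "A \<inter> B"] A by blast
        have h2: "k \<le> r1 (A \<union> insert e B) + r2 (?G - (A \<union> insert e B))" using h[rule_format, of "A \<union> insert e B"] A B by blast
        have s1': "r1 (A \<union> insert e B) + r1 (A \<inter> B) \<le> r1 A + r1 (insert e B)" using s1 e1' by simp
        have s2': "r2 (?G - (A \<inter> B)) + r2 (?G - (A \<union> insert e B)) \<le> r2 (F - A) + r2 (?G - B)"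
          using s2 e2' e3' by simp
        show ?thesis using s1' s2' h1 h2 A(2) Bk by linarith
      qed
    qed
  qed
qed

definition dualr :: "'a set \<Rightarrow> ('a set \<Rightarrow> nat) \<Rightarrow> 'a set \<Rightarrow> nat" where
  "dualr G r = (\<lambda>Y. card Y + r (G - Y) - r G)"

lemma rankf_le_compl: "rankf G r \<Longrightarrow> Y \<subseteq> G \<Longrightarrow> r G \<le> card Y + r (G - Y)"
proof -
  assume r: "rankf G r" and Y: "Y \<subseteq> G"
  have "r (Y \<union> (G - Y)) \<le> r Y + r (G - Y)" using rankf_subadd[OF r Y, of "G - Y"] by auto
  moreover have "Y \<union> (G - Y) = G" using Y by auto
  moreover have "r Y \<le> card Y" using rankfD(2)[OF r Y] .
  ultimately show ?thesis by simp
qed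

lemma rankf_dual:
  assumes r: "rankf G r"
  shows "rankf G (dualr G r)"
  unfolding rankf_def dualr_def
proof (intro conjI allI impI)
  show "finite G" using rankfD(1)[OF r] .
next
  fix X assume X: "X \<subseteq> G"
  have "r (G - X) \<le> r G" using rankfD(3)[OF r, of "G - X" G] by auto
  then show "card X + r (G - X) - r G \<le> card X" by linarith
next
  fix X Y assume a: "X \<subseteq> Y \<and> Y \<subseteq> G"
  have fG: "finite G" using rankfD(1)[OF r] .
  have "r ((G - Y) \<union> (Y - X)) \<le> r (G - Y) + r (Y - X)" using rankf_subadd[OF r, of "G - Y" "Y - X"] a by auto
  moreover have "(G - Y) \<union> (Y - X) = G - X" using a by auto
  moreover have "r (Y - X) \<le> card (Y - X)" using rankfD(2)[OF r, of "Y - X"] a by auto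
  moreover have "card Y = card X + card (Y - X)" using a fG
    by (metis card_Diff_subset card_mono finite_subset le_add_diff_inverse)
  ultimately show "card X + r (G - X) - r G \<le> card Y + r (G - Y) - r G" by simp
next
  fix X Y assume a: "X \<subseteq> G \<and> Y \<subseteq> G"
  have fG: "finite G" using rankfD(1)[OF r] .
  have s: "r ((G - X) \<union> (G - Y)) + r ((G - X) \<inter> (G - Y)) \<le> r (G - X) + r (G - Y)"
    using rankfD(4)[OF r, of "G - X" "G - Y"] by auto
  have e1: "(G - X) \<union> (G - Y) = G - (X \<inter> Y)" and e2: "(G - X) \<inter> (G - Y) = G - (X \<union> Y)" by auto
  have s': "r (G - (X \<inter> Y)) + r (G - (X \<union> Y)) \<le> r (G - X) + r (G - Y)" using s e1 e2 by simp
  have c: "card (X \<union> Y) + card (X \<inter> Y) = card X + card Y"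
    using card_Un_Int[of X Y] a fG finite_subset by metis
  have b1: "r G \<le> card (X \<union> Y) + r (G - (X \<union> Y))" using rankf_le_compl[OF r, of "X \<union> Y"] a by auto
  have b2: "r G \<le> card (X \<inter> Y) + r (G - (X \<inter> Y))" using rankf_le_compl[OF r, of "X \<inter> Y"] a by auto
  have b3: "r G \<le> card X + r (G - X)" using rankf_le_compl[OF r, of X] a by auto
  have b4: "r G \<le> card Y + r (G - Y)" using rankf_le_compl[OF r, of Y] a by auto
  show "card (X \<union> Y) + r (G - (X \<union> Y)) - r G + (card (X \<inter> Y) + r (G - (X \<inter> Y)) - r G)
        \<le> card X + r (G - X) - r G + (card Y + r (G - Y) - r G)"
    using s' c b1 b2 b3 b4 by linarith
qed

lemma matroid_partition:
  assumes s1: "rankf X s1" and s2: "rankf X s2" and h: "\<forall>T\<subseteq>X. card T \<le> s1 T + s2 T"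
  shows "\<exists>I1 I2. I1 \<union> I2 = X \<and> s1 I1 = card I1 \<and> s2 I2 = card I2"
proof -
  have fX: "finite X" using rankfD(1)[OF s1] .
  let ?d = "dualr X s2"
  have d: "rankf X ?d" using rankf_dual[OF s2] .
  have "\<forall>A\<subseteq>X. card X - s2 X \<le> s1 A + ?d (X - A)"
  proof (intro allI impI)
    fix A assume A: "A \<subseteq> X"
    have "X - (X - A) = A" using A by auto
    then have dv: "?d (X - A) = card (X - A) + s2 A - s2 X" unfolding dualr_def by simp
    have "card X = card A + card (X - A)" using A fX
      by (metis card_Diff_subset card_mono finite_subset le_add_diff_inverse)
    moreover have "card A \<le> s1 A + s2 A" using h A by blast
    ultimately show "card X - s2 X \<le> s1 A + ?d (X - A)" using dv by linarith
  qed
  then obtain I where I: "I \<subseteq> X" "s1 I = card I" "?d I = card I" "card X - s2 X \<le> card I"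
    using matroid_intersection_aux[OF fX, rule_format, OF s1 d, of "card X - s2 X"] by blast
  have b: "s2 X \<le> card I + s2 (X - I)" using rankf_le_compl[OF s2 I(1)] .
  have m: "s2 (X - I) \<le> s2 X" using rankfD(3)[OF s2, of "X - I" X] by auto
  have eq: "s2 (X - I) = s2 X" using I(3) b m unfolding dualr_def by linarith
  have cX: "card X = card I + card (X - I)" using I(1) fX
    by (metis card_Diff_subset card_mono finite_subset le_add_diff_inverse)
  have le: "s2 (X - I) \<le> card (X - I)" using rankfD(2)[OF s2, of "X - I"] by auto
  have "s2 (X - I) = card (X - I)" using eq cX le I(4) by linarith
  moreover have "I \<union> (X - I) = X" using I(1) by auto
  ultimately show ?thesis using I(2) by blast
qed

definition bases_of :: "'a set \<Rightarrow> ('a set \<Rightarrow> nat) \<Rightarrow> 'a set set" where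
  "bases_of G r = {X. X \<subseteq> G \<and> r X = card X \<and> card X = r G}"

lemma bases_of_ex:
  assumes r: "rankf G r" "I \<subseteq> G" "r I = card I"
  shows "\<exists>B\<in>bases_of G r. I \<subseteq> B"
proof -
  obtain J where "I \<subseteq> J" "J \<subseteq> G" "r J = card J" "r J = r G" using rankf_extend[OF r(1) order_refl r(2,3)] by blast
  then show ?thesis unfolding bases_of_def by auto
qed

lemma bases_of_matroid:
  assumes r: "rankf G r"
  shows "matroid G (bases_of G r)"
  unfolding matroid_def
proof (intro conjI ballI)
  show "finite G" using rankfD(1)[OF r] .
  show "bases_of G r \<noteq> {}" using bases_of_ex[OF r, of "{}"] rankf_empty[OF r] by auto
next
  fix X assume "X \<in> bases_of G r" then show "X \<subseteq> G" unfolding bases_of_def by auto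
next
  fix B1 B2 x assume B1: "B1 \<in> bases_of G r" and B2: "B2 \<in> bases_of G r" and x: "x \<in> B1 - B2"
  have fG: "finite G" using rankfD(1)[OF r] .
  have B1G: "B1 \<subseteq> G" "r B1 = card B1" "card B1 = r G" using B1 unfolding bases_of_def by auto
  have B2G: "B2 \<subseteq> G" "r B2 = card B2" "card B2 = r G" using B2 unfolding bases_of_def by auto
  have fB1: "finite B1" using B1G fG finite_subset by blast
  let ?S = "B1 - {x}"
  have SG: "?S \<subseteq> G" using B1G by auto
  have rS: "r ?S = card ?S" using rankf_indep_subset[OF r B1G(1) B1G(2)] by blast
  have cS: "card ?S = card B1 - 1" using x fB1 by simp
  have c1: "card B1 \<ge> 1" using x fB1 card_0_eq by fastforce
  show "\<exists>y\<in>B2 - B1. insert y (B1 - {x}) \<in> bases_of G r"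
  proof (rule ccontr)
    assume na: "\<not> (\<exists>y\<in>B2 - B1. insert y (B1 - {x}) \<in> bases_of G r)"
    have "\<forall>y\<in>B2 - B1. r (insert y ?S) = r ?S"
    proof
      fix y assume y: "y \<in> B2 - B1"
      have yG: "y \<in> G" using y B2G by auto
      have le: "r (insert y ?S) \<le> r ?S + 1" using rankf_insert[OF r SG yG] .
      have ge: "r ?S \<le> r (insert y ?S)" using rankfD(3)[OF r, of ?S "insert y ?S"] SG yG by auto
      have ci: "card (insert y ?S) = card B1" using y fB1 cS c1 by simp
      have "r (insert y ?S) \<noteq> card B1"
      proof
        assume "r (insert y ?S) = card B1"
        then have "insert y ?S \<in> bases_of G r" unfolding bases_of_def using ci SG yG B1G by auto
        then show False using na y by blast
      qed
      then show "r (insert y ?S) = r ?S" using le ge rS cS c1 by linarith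
    qed
    then have "r (?S \<union> (B2 - B1)) = r ?S" using rankf_closure[OF r SG, of "B2 - B1"] B2G by auto
    moreover have "r B2 \<le> r (?S \<union> (B2 - B1))" using rankfD(3)[OF r, of B2 "?S \<union> (B2 - B1)"] x B1G B2G by auto
    ultimately show False using rS cS c1 B1G B2G by linarith
  qed
qed

lemma mrank_bases_of:
  assumes r: "rankf G r" and A: "A \<subseteq> G"
  shows "mrank (bases_of G r) A = r A"
proof -
  have fG: "finite G" using rankfD(1)[OF r] .
  have "bases_of G r \<subseteq> Pow G" unfolding bases_of_def by auto
  then have fin: "finite (bases_of G r)" using fG finite_subset by blast
  have up: "\<forall>B\<in>bases_of G r. card (A \<inter> B) \<le> r A"
  proof
    fix B assume B: "B \<in> bases_of G r"
    then have "B \<subseteq> G" "r B = card B" unfolding bases_of_def by auto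
    then have "r (A \<inter> B) = card (A \<inter> B)" using rankf_indep_subset[OF r] by blast
    moreover have "r (A \<inter> B) \<le> r A" using rankfD(3)[OF r, of "A \<inter> B" A] A by auto
    ultimately show "card (A \<inter> B) \<le> r A" by simp
  qed
  obtain I where I: "I \<subseteq> A" "r I = card I" "r I = r A"
    using rankf_extend[OF r A, of "{}"] rankf_empty[OF r] by auto
  obtain J where J: "J \<in> bases_of G r" "I \<subseteq> J" using bases_of_ex[OF r, of I] I A by auto
  have "I \<subseteq> A \<inter> J" using I J by auto
  moreover have "finite (A \<inter> J)" using fG A finite_subset by (metis inf.coboundedI1)
  ultimately have "card I \<le> card (A \<inter> J)" by (simp add: card_mono)
  then have eqJ: "card (A \<inter> J) = r A" using up J I by fastforce
  show ?thesis unfolding mrank_def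
    apply (rule Max_eqI)
    using fin up J eqJ by (auto intro!: image_eqI[of _ _ J])
qed

definition indep_of :: "'a set set \<Rightarrow> 'a set \<Rightarrow> bool" where
  "indep_of \<B> X \<longleftrightarrow> (\<exists>B\<in>\<B>. X \<subseteq> B)"

lemma matroidD:
  assumes "matroid E \<B>"
  shows "finite E" "\<B> \<noteq> {}" "B \<in> \<B> \<Longrightarrow> B \<subseteq> E"
    "B1 \<in> \<B> \<Longrightarrow> B2 \<in> \<B> \<Longrightarrow> x \<in> B1 - B2 \<Longrightarrow> \<exists>y\<in>B2 - B1. insert y (B1 - {x}) \<in> \<B>"
  using assms unfolding matroid_def by blast+

lemma matroid_finB: "matroid E \<B> \<Longrightarrow> finite \<B>"
proof -
  assume m: "matroid E \<B>"
  have "\<B> \<subseteq> Pow E" using matroidD(3)[OF m] by auto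
  then show ?thesis using matroidD(1)[OF m] finite_subset by blast
qed

lemma matroid_finbase: "matroid E \<B> \<Longrightarrow> B \<in> \<B> \<Longrightarrow> finite B"
  using matroidD(1,3) finite_subset by metis

lemma base_card_aux:
  assumes m: "matroid E \<B>"
  shows "\<forall>B1 B2. B1 \<in> \<B> \<longrightarrow> B2 \<in> \<B> \<longrightarrow> card (B1 - B2) = n \<longrightarrow> card B1 \<le> card B2"
proof (induction n)
  case 0
  show ?case
  proof (intro allI impI)
    fix B1 B2 assume a: "B1 \<in> \<B>" "B2 \<in> \<B>" "card (B1 - B2) = 0"
    have "finite (B1 - B2)" using matroid_finbase[OF m a(1)] by auto
    then have "B1 \<subseteq> B2" using a(3) by auto
    then show "card B1 \<le> card B2" using matroid_finbase[OF m a(2)] card_mono by blast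
  qed
next
  case (Suc n)
  show ?case
  proof (intro allI impI)
    fix B1 B2 assume a: "B1 \<in> \<B>" "B2 \<in> \<B>" "card (B1 - B2) = Suc n"
    have f1: "finite B1" using matroid_finbase[OF m a(1)] .
    obtain x where x: "x \<in> B1 - B2" using a(3) by (metis card.empty ex_in_conv nat.distinct(1))
    obtain y where y: "y \<in> B2 - B1" "insert y (B1 - {x}) \<in> \<B>" using matroidD(4)[OF m a(1,2) x] by blast
    have "insert y (B1 - {x}) - B2 = (B1 - B2) - {x}" using x y by auto
    then have "card (insert y (B1 - {x}) - B2) = n" using a(3) x f1 by simp
    then have "card (insert y (B1 - {x})) \<le> card B2" using Suc.IH y(2) a(2) by blast
    moreover have "card (insert y (B1 - {x})) = card B1" using x y f1
      by (metis DiffD1 DiffD2 card_Suc_Diff1 card_insert_disjoint finite_Diff insert_Diff_single insert_absorb insert_iff)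
    ultimately show "card B1 \<le> card B2" by simp
  qed
qed

lemma base_card: "matroid E \<B> \<Longrightarrow> B1 \<in> \<B> \<Longrightarrow> B2 \<in> \<B> \<Longrightarrow> card B1 = card B2"
  using base_card_aux by (metis le_antisym)

lemma augment:
  assumes m: "matroid E \<B>" and i1: "indep_of \<B> I1" and i2: "indep_of \<B> I2" and c: "card I1 < card I2"
  shows "\<exists>y\<in>I2 - I1. indep_of \<B> (insert y I1)"
proof (rule ccontr)
  assume na: "\<not> (\<exists>y\<in>I2 - I1. indep_of \<B> (insert y I1))"
  let ?P = "\<lambda>p. fst p \<in> \<B> \<and> snd p \<in> \<B> \<and> I1 \<subseteq> fst p \<and> I2 \<subseteq> snd p"
  let ?m = "\<lambda>p. card (snd p - (I2 \<union> fst p))"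
  obtain C1 C2 where "C1 \<in> \<B>" "C2 \<in> \<B>" "I1 \<subseteq> C1" "I2 \<subseteq> C2" using i1 i2 unfolding indep_of_def by blast
  then have "?P (C1, C2)" by simp
  then obtain p where p: "?P p" and pm: "\<forall>q. ?P q \<longrightarrow> ?m p \<le> ?m q"
    using ex_has_least_nat[of ?P "(C1, C2)" ?m] by blast
  obtain B1 B2 where pp: "p = (B1, B2)" by (cases p)
  have B: "B1 \<in> \<B>" "B2 \<in> \<B>" "I1 \<subseteq> B1" "I2 \<subseteq> B2" using p pp by auto
  have fB1: "finite B1" "finite B2" using matroid_finbase[OF m] B by auto
  have st1: "B2 - (I2 \<union> B1) = {}"
  proof (rule ccontr)
    assume "B2 - (I2 \<union> B1) \<noteq> {}"
    then obtain x where x: "x \<in> B2 - (I2 \<union> B1)" by blast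
    then have "x \<in> B2 - B1" by blast
    then obtain y where y: "y \<in> B1 - B2" "insert y (B2 - {x}) \<in> \<B>" using matroidD(4)[OF m B(2,1)] by blast
    have "?P (B1, insert y (B2 - {x}))" using B y x by auto
    then have "?m p \<le> ?m (B1, insert y (B2 - {x}))" using pm by blast
    moreover have "insert y (B2 - {x}) - (I2 \<union> B1) = (B2 - (I2 \<union> B1)) - {x}" using y by auto
    moreover have "card ((B2 - (I2 \<union> B1)) - {x}) < card (B2 - (I2 \<union> B1))"
      using x fB1 by (meson card_Diff1_less finite_Diff)
    ultimately show False using pp by simp
  qed
  have st2: "B1 - B2 \<subseteq> I1"
  proof
    fix x assume x: "x \<in> B1 - B2"
    show "x \<in> I1"
    proof (rule ccontr)
      assume xI: "x \<notin> I1"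
      obtain y where y: "y \<in> B2 - B1" "insert y (B1 - {x}) \<in> \<B>" using matroidD(4)[OF m B(1,2) x] by blast
      have yI2: "y \<in> I2" using y st1 by blast
      have yI1: "y \<notin> I1" using y B by blast
      have "insert y I1 \<subseteq> insert y (B1 - {x})" using B xI by blast
      then have "indep_of \<B> (insert y I1)" using y(2) unfolding indep_of_def by blast
      then show False using na yI2 yI1 by blast
    qed
  qed
  have st3: "I2 - I1 \<subseteq> B2 - B1"
  proof
    fix y assume y: "y \<in> I2 - I1"
    have "y \<notin> B1"
    proof
      assume "y \<in> B1"
      then have "indep_of \<B> (insert y I1)" using B unfolding indep_of_def by blast
      then show False using na y by blast
    qed
    then show "y \<in> B2 - B1" using y B by blast
  qed
  have cb: "card B1 = card B2" using base_card[OF m B(1,2)] .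
  have d12: "card (B1 - B2) = card (B2 - B1)"
  proof -
    have "card B1 = card (B1 \<inter> B2) + card (B1 - B2)" using fB1 card_Int_Diff by blast
    moreover have "card B2 = card (B1 \<inter> B2) + card (B2 - B1)" using fB1 card_Int_Diff[of B2 B1] by (simp add: Int_commute)
    ultimately show ?thesis using cb by simp
  qed
  have fI: "finite I1" "finite I2" using B fB1 finite_subset by auto
  have "card (I2 - I1) \<le> card (B2 - B1)" using st3 fB1 by (simp add: card_mono)
  moreover have "B1 - B2 \<subseteq> I1 - I2" using st2 B by blast
  then have "card (B1 - B2) \<le> card (I1 - I2)" using fI by (simp add: card_mono)
  moreover have "card I1 = card (I1 \<inter> I2) + card (I1 - I2)" using fI card_Int_Diff by blast
  moreover have "card I2 = card (I1 \<inter> I2) + card (I2 - I1)" using fI card_Int_Diff[of I2 I1] by (simp add: Int_commute)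
  ultimately show False using c d12 by linarith
qed

lemma mrank_ge:
  assumes m: "matroid E \<B>" and A: "A \<subseteq> E" and I: "indep_of \<B> I" "I \<subseteq> A"
  shows "card I \<le> mrank \<B> A"
proof -
  obtain B0 where B0: "B0 \<in> \<B>" "I \<subseteq> B0" using I unfolding indep_of_def by blast
  have fA: "finite A" using A matroidD(1)[OF m] finite_subset by blast
  have "card I \<le> card (A \<inter> B0)" using I B0 fA by (simp add: card_mono)
  also have "\<dots> \<le> mrank \<B> A" unfolding mrank_def using matroid_finB[OF m] B0 by (simp add: Max_ge)
  finally show ?thesis .
qed

lemma mrank_ex:
  assumes m: "matroid E \<B>"
  shows "\<exists>B0\<in>\<B>. card (A \<inter> B0) = mrank \<B> A"
proof -
  have "mrank \<B> A \<in> (\<lambda>B. card (A \<inter> B)) ` \<B>" unfolding mrank_def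
    using matroid_finB[OF m] matroidD(2)[OF m] by (simp add: Max_in)
  then show ?thesis by auto
qed

lemma mrank_le: "matroid E \<B> \<Longrightarrow> A \<subseteq> E \<Longrightarrow> mrank \<B> A \<le> card A"
  using mrank_ex[of E \<B> A] matroidD(1) finite_subset by (metis card_mono inf_le1)

lemma extend_maximal:
  assumes m: "matroid E \<B>" and A: "A \<subseteq> E" and I: "indep_of \<B> I" "I \<subseteq> A"
  shows "\<exists>J. I \<subseteq> J \<and> J \<subseteq> A \<and> indep_of \<B> J \<and> (\<forall>y\<in>A - J. \<not> indep_of \<B> (insert y J))"
proof -
  have fA: "finite A" using A matroidD(1)[OF m] finite_subset by blast
  let ?P = "\<lambda>J. I \<subseteq> J \<and> J \<subseteq> A \<and> indep_of \<B> J"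
  obtain J where J: "?P J" and Jm: "\<forall>J'. ?P J' \<longrightarrow> card A - card J \<le> card A - card J'"
    using ex_has_least_nat[of ?P I "\<lambda>J. card A - card J"] I by blast
  have "\<forall>y\<in>A - J. \<not> indep_of \<B> (insert y J)"
  proof (intro ballI notI)
    fix y assume y: "y \<in> A - J" and i: "indep_of \<B> (insert y J)"
    have fJ: "finite J" using J fA finite_subset by blast
    have "?P (insert y J)" using J y i by auto
    then have "card A - card J \<le> card A - card (insert y J)" using Jm by blast
    moreover have "card (insert y J) \<le> card A" using y J fA by (simp add: card_mono)
    moreover have "card (insert y J) = card J + 1" using y fJ by simp
    ultimately show False by linarith
  qed
  then show ?thesis using J by blast
qed

lemma maximal_card:
  assumes m: "matroid E \<B>" and A: "A \<subseteq> E" and J: "J \<subseteq> A" "indep_of \<B> J"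
    and mx: "\<forall>y\<in>A - J. \<not> indep_of \<B> (insert y J)"
  shows "card J = mrank \<B> A"
proof -
  have le: "card J \<le> mrank \<B> A" using mrank_ge[OF m A J(2,1)] .
  obtain B0 where B0: "B0 \<in> \<B>" "card (A \<inter> B0) = mrank \<B> A" using mrank_ex[OF m] by blast
  have iB: "indep_of \<B> (A \<inter> B0)" using B0 unfolding indep_of_def by blast
  show ?thesis
  proof (rule ccontr)
    assume "card J \<noteq> mrank \<B> A"
    then have "card J < card (A \<inter> B0)" using le B0 by simp
    then obtain y where "y \<in> (A \<inter> B0) - J" "indep_of \<B> (insert y J)" using augment[OF m J(2) iB] by blast
    then show False using mx by blast
  qed
qed

lemma indep_mono: "indep_of \<B> X \<Longrightarrow> Y \<subseteq> X \<Longrightarrow> indep_of \<B> Y"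
  unfolding indep_of_def by blast

lemma matroid_rankf:
  assumes m: "matroid E \<B>"
  shows "rankf E (mrank \<B>)"
  unfolding rankf_def
proof (intro conjI allI impI)
  show "finite E" using matroidD(1)[OF m] .
next
  fix X assume "X \<subseteq> E" then show "mrank \<B> X \<le> card X" using mrank_le[OF m] by blast
next
  fix X Y assume a: "X \<subseteq> Y \<and> Y \<subseteq> E"
  obtain B0 where B0: "B0 \<in> \<B>" "card (X \<inter> B0) = mrank \<B> X" using mrank_ex[OF m] by blast
  have "indep_of \<B> (X \<inter> B0)" using B0 unfolding indep_of_def by blast
  then have "card (X \<inter> B0) \<le> mrank \<B> Y" using mrank_ge[OF m, of Y "X \<inter> B0"] a by auto
  then show "mrank \<B> X \<le> mrank \<B> Y" using B0 by simp
next
  fix A C assume a: "A \<subseteq> E \<and> C \<subseteq> E"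
  have fE: "finite E" using matroidD(1)[OF m] .
  obtain B0 where B0: "B0 \<in> \<B>" "card ((A \<inter> C) \<inter> B0) = mrank \<B> (A \<inter> C)" using mrank_ex[OF m] by blast
  let ?I = "(A \<inter> C) \<inter> B0"
  have iI: "indep_of \<B> ?I" using B0 unfolding indep_of_def by blast
  obtain J where J: "?I \<subseteq> J" "J \<subseteq> A \<union> C" "indep_of \<B> J" "\<forall>y\<in>(A \<union> C) - J. \<not> indep_of \<B> (insert y J)"
    using extend_maximal[OF m _ iI, of "A \<union> C"] a by auto
  have cJ: "card J = mrank \<B> (A \<union> C)" using maximal_card[OF m _ J(2,3,4)] a by auto
  have "A \<union> C \<subseteq> E" using a by auto
  then have fJ: "finite J" using J(2) fE by (meson finite_subset order_trans)
  have jA: "card (J \<inter> A) \<le> mrank \<B> A" using mrank_ge[OF m _ indep_mono[OF J(3), of "J \<inter> A"], of A] a by simp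
  have jC: "card (J \<inter> C) \<le> mrank \<B> C" using mrank_ge[OF m _ indep_mono[OF J(3), of "J \<inter> C"], of C] a by simp
  have u: "(J \<inter> A) \<union> (J \<inter> C) = J" using J(2) by blast
  have "card ((J \<inter> A) \<union> (J \<inter> C)) + card ((J \<inter> A) \<inter> (J \<inter> C)) = card (J \<inter> A) + card (J \<inter> C)"
    using card_Un_Int[of "J \<inter> A" "J \<inter> C"] fJ by simp
  then have cu: "card J + card ((J \<inter> A) \<inter> (J \<inter> C)) = card (J \<inter> A) + card (J \<inter> C)" by (simp only: u)
  moreover have "card ?I \<le> card ((J \<inter> A) \<inter> (J \<inter> C))"
    using J(1) fJ by (intro card_mono) auto
  ultimately show "mrank \<B> (A \<union> C) + mrank \<B> (A \<inter> C) \<le> mrank \<B> A + mrank \<B> C"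
    using cJ B0 jA jC by linarith
qed

lemma matroid_bases_of:
  assumes m: "matroid E \<B>"
  shows "\<B> = bases_of E (mrank \<B>)"
proof
  have fE: "finite E" using matroidD(1)[OF m] .
  show "\<B> \<subseteq> bases_of E (mrank \<B>)"
  proof
    fix B assume B: "B \<in> \<B>"
    have BE: "B \<subseteq> E" using matroidD(3)[OF m B] .
    have iB: "indep_of \<B> B" using B unfolding indep_of_def by blast
    have "card B \<le> mrank \<B> B" using mrank_ge[OF m BE iB] by simp
    moreover have "mrank \<B> B \<le> card B" using mrank_le[OF m BE] .
    moreover have "card B \<le> mrank \<B> E" using mrank_ge[OF m _ iB BE] by simp
    moreover obtain B' where "B' \<in> \<B>" "card (E \<inter> B') = mrank \<B> E" using mrank_ex[OF m] by blast
    moreover then have "card (E \<inter> B') = card B" using base_card[OF m _ B] matroidD(3)[OF m]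
      by (metis inf.absorb_iff2)
    ultimately show "B \<in> bases_of E (mrank \<B>)" unfolding bases_of_def using BE by auto
  qed
next
  have fE: "finite E" using matroidD(1)[OF m] .
  show "bases_of E (mrank \<B>) \<subseteq> \<B>"
  proof
    fix X assume X: "X \<in> bases_of E (mrank \<B>)"
    then have XE: "X \<subseteq> E" and r: "mrank \<B> X = card X" and c: "card X = mrank \<B> E" unfolding bases_of_def by auto
    obtain B0 where B0: "B0 \<in> \<B>" "card (X \<inter> B0) = mrank \<B> X" using mrank_ex[OF m] by blast
    have fX: "finite X" using XE fE finite_subset by blast
    have "X \<inter> B0 = X" using B0 r fX by (metis card_subset_eq inf_le1)
    then have XB0: "X \<subseteq> B0" by blast
    have iB0: "indep_of \<B> B0" using B0 unfolding indep_of_def by blast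
    have "card B0 \<le> mrank \<B> E" using mrank_ge[OF m _ iB0 matroidD(3)[OF m B0(1)]] by simp
    then have "X = B0" using XB0 c matroid_finbase[OF m B0(1)] by (metis card_seteq)
    then show "X \<in> \<B>" using B0 by simp
  qed
qed

definition unionr :: "('a set \<Rightarrow> nat) \<Rightarrow> ('a set \<Rightarrow> nat) \<Rightarrow> 'a set \<Rightarrow> nat" where
  "unionr s1 s2 = (\<lambda>A. Min ((\<lambda>T. card (A - T) + s1 T + s2 T) ` Pow A))"

lemma unionr_le: "finite A \<Longrightarrow> T \<subseteq> A \<Longrightarrow> unionr s1 s2 A \<le> card (A - T) + s1 T + s2 T"
  unfolding unionr_def by (rule Min_le) auto

lemma unionr_ex: "finite A \<Longrightarrow> \<exists>T\<subseteq>A. unionr s1 s2 A = card (A - T) + s1 T + s2 T"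
proof -
  assume fA: "finite A"
  have "unionr s1 s2 A \<in> (\<lambda>T. card (A - T) + s1 T + s2 T) ` Pow A"
    unfolding unionr_def using fA by (intro Min_in) auto
  then show ?thesis by auto
qed

lemma rankf_union:
  assumes s1: "rankf G s1" and s2: "rankf G s2"
  shows "rankf G (unionr s1 s2)"
  unfolding rankf_def
proof (intro conjI allI impI)
  have fG: "finite G" using rankfD(1)[OF s1] .
  show "finite G" by fact
next
  fix X assume X: "X \<subseteq> G"
  have fX: "finite X" using X rankfD(1)[OF s1] finite_subset by blast
  show "unionr s1 s2 X \<le> card X" using unionr_le[OF fX, of "{}" s1 s2] rankf_empty[OF s1] rankf_empty[OF s2] by simp
next
  fix X Y assume a: "X \<subseteq> Y \<and> Y \<subseteq> G"
  have fY: "finite Y" using a rankfD(1)[OF s1] finite_subset by blast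
  have fX: "finite X" using a fY finite_subset by blast
  obtain T where T: "T \<subseteq> Y" "unionr s1 s2 Y = card (Y - T) + s1 T + s2 T" using unionr_ex[OF fY] by blast
  have "unionr s1 s2 X \<le> card (X - (T \<inter> X)) + s1 (T \<inter> X) + s2 (T \<inter> X)" using unionr_le[OF fX, of "T \<inter> X"] by blast
  moreover have "card (X - (T \<inter> X)) \<le> card (Y - T)" using a fY by (intro card_mono) auto
  moreover have "s1 (T \<inter> X) \<le> s1 T" using rankfD(3)[OF s1, of "T \<inter> X" T] T a by auto
  moreover have "s2 (T \<inter> X) \<le> s2 T" using rankfD(3)[OF s2, of "T \<inter> X" T] T a by auto
  ultimately show "unionr s1 s2 X \<le> unionr s1 s2 Y" using T by linarith
next
  fix A C assume a: "A \<subseteq> G \<and> C \<subseteq> G"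
  have fA: "finite A" and fC: "finite C" using a rankfD(1)[OF s1] finite_subset by blast+
  obtain TA where TA: "TA \<subseteq> A" "unionr s1 s2 A = card (A - TA) + s1 TA + s2 TA" using unionr_ex[OF fA] by blast
  obtain TC where TC: "TC \<subseteq> C" "unionr s1 s2 C = card (C - TC) + s1 TC + s2 TC" using unionr_ex[OF fC] by blast
  have u1: "unionr s1 s2 (A \<union> C) \<le> card ((A \<union> C) - (TA \<union> TC)) + s1 (TA \<union> TC) + s2 (TA \<union> TC)"
    using unionr_le[of "A \<union> C" "TA \<union> TC"] fA fC TA TC by auto
  have u2: "unionr s1 s2 (A \<inter> C) \<le> card ((A \<inter> C) - (TA \<inter> TC)) + s1 (TA \<inter> TC) + s2 (TA \<inter> TC)"
    using unionr_le[of "A \<inter> C" "TA \<inter> TC"] fA fC TA TC by auto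
  have m1: "s1 (TA \<union> TC) + s1 (TA \<inter> TC) \<le> s1 TA + s1 TC" using rankfD(4)[OF s1, of TA TC] TA TC a by auto
  have m2: "s2 (TA \<union> TC) + s2 (TA \<inter> TC) \<le> s2 TA + s2 TC" using rankfD(4)[OF s2, of TA TC] TA TC a by auto
  let ?P = "(A \<union> C) - (TA \<union> TC)" and ?Q = "(A \<inter> C) - (TA \<inter> TC)"
  have "card ?P + card ?Q = card (?P \<union> ?Q) + card (?P \<inter> ?Q)" using card_Un_Int[of ?P ?Q] fA fC by simp
  moreover have "?P \<union> ?Q = (A - TA) \<union> (C - TC)" using TA TC by auto
  moreover have "?P \<inter> ?Q = (A - TA) \<inter> (C - TC)" using TA TC by auto
  moreover have "card ((A - TA) \<union> (C - TC)) + card ((A - TA) \<inter> (C - TC)) = card (A - TA) + card (C - TC)"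
    using card_Un_Int[of "A - TA" "C - TC"] fA fC by simp
  ultimately have cc: "card ?P + card ?Q = card (A - TA) + card (C - TC)" by simp
  show "unionr s1 s2 (A \<union> C) + unionr s1 s2 (A \<inter> C) \<le> unionr s1 s2 A + unionr s1 s2 C"
    using u1 u2 m1 m2 cc TA TC by linarith
qed

lemma union_indep:
  assumes s1: "rankf G s1" and s2: "rankf G s2" and X: "X \<subseteq> G"
  shows "unionr s1 s2 X = card X \<longleftrightarrow> (\<exists>I1 I2. I1 \<union> I2 = X \<and> s1 I1 = card I1 \<and> s2 I2 = card I2)"
proof
  have fX: "finite X" using X rankfD(1)[OF s1] finite_subset by blast
  assume u: "unionr s1 s2 X = card X"
  have "\<forall>T\<subseteq>X. card T \<le> s1 T + s2 T"
  proof (intro allI impI)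
    fix T assume T: "T \<subseteq> X"
    have "card X \<le> card (X - T) + s1 T + s2 T" using unionr_le[OF fX T, of s1 s2] u by simp
    moreover have "card X = card T + card (X - T)" using T fX
      by (metis card_Diff_subset card_mono finite_subset le_add_diff_inverse)
    ultimately show "card T \<le> s1 T + s2 T" by linarith
  qed
  then show "\<exists>I1 I2. I1 \<union> I2 = X \<and> s1 I1 = card I1 \<and> s2 I2 = card I2"
    using matroid_partition[OF rankf_sub[OF s1 X] rankf_sub[OF s2 X]] by blast
next
  have fX: "finite X" using X rankfD(1)[OF s1] finite_subset by blast
  assume "\<exists>I1 I2. I1 \<union> I2 = X \<and> s1 I1 = card I1 \<and> s2 I2 = card I2"
  then obtain I1 I2 where I: "I1 \<union> I2 = X" "s1 I1 = card I1" "s2 I2 = card I2" by blast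
  obtain T where T: "T \<subseteq> X" "unionr s1 s2 X = card (X - T) + s1 T + s2 T" using unionr_ex[OF fX] by blast
  have I1G: "I1 \<subseteq> G" and I2G: "I2 \<subseteq> G" using I X by auto
  have a1: "s1 (I1 \<inter> T) = card (I1 \<inter> T)" using rankf_indep_subset[OF s1 I1G I(2)] by blast
  have a2: "s2 (I2 \<inter> T) = card (I2 \<inter> T)" using rankf_indep_subset[OF s2 I2G I(3)] by blast
  have b1: "s1 (I1 \<inter> T) \<le> s1 T" using rankfD(3)[OF s1, of "I1 \<inter> T" T] T X by auto
  have b2: "s2 (I2 \<inter> T) \<le> s2 T" using rankfD(3)[OF s2, of "I2 \<inter> T" T] T X by auto
  have "T = (I1 \<inter> T) \<union> (I2 \<inter> T)" using I T by auto
  then have "card T \<le> card (I1 \<inter> T) + card (I2 \<inter> T)" by (metis card_Un_le)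
  moreover have "card X = card T + card (X - T)" using T fX
    by (metis card_Diff_subset card_mono finite_subset le_add_diff_inverse)
  moreover have "unionr s1 s2 X \<le> card X" using rankfD(2)[OF rankf_union[OF s1 s2] X] .
  ultimately show "unionr s1 s2 X = card X" using T a1 a2 b1 b2 by linarith
qed

lemma union_bases_of:
  assumes s1: "rankf G s1" and s2: "rankf G s2"
  shows "union_bases (bases_of G s1) (bases_of G s2) = bases_of G (unionr s1 s2)"
proof -
  let ?f = "unionr s1 s2"
  let ?U = "{B1 \<union> B2 | B1 B2. B1 \<in> bases_of G s1 \<and> B2 \<in> bases_of G s2}"
  have f: "rankf G ?f" using rankf_union[OF s1 s2] .
  have fG: "finite G" using rankfD(1)[OF s1] .
  have Uind: "\<And>Y. Y \<in> ?U \<Longrightarrow> Y \<subseteq> G \<and> ?f Y = card Y"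
  proof -
    fix Y assume "Y \<in> ?U"
    then obtain B1 B2 where B: "Y = B1 \<union> B2" "B1 \<in> bases_of G s1" "B2 \<in> bases_of G s2" by blast
    then have "Y \<subseteq> G" unfolding bases_of_def by auto
    moreover have "s1 B1 = card B1" "s2 B2 = card B2" using B unfolding bases_of_def by auto
    ultimately show "Y \<subseteq> G \<and> ?f Y = card Y" using union_indep[OF s1 s2] B by blast
  qed
  have indU: "\<And>X. X \<subseteq> G \<Longrightarrow> ?f X = card X \<Longrightarrow> \<exists>Y\<in>?U. X \<subseteq> Y"
  proof -
    fix X assume X: "X \<subseteq> G" "?f X = card X"
    then obtain I1 I2 where I: "I1 \<union> I2 = X" "s1 I1 = card I1" "s2 I2 = card I2"
      using union_indep[OF s1 s2 X(1)] by blast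
    obtain B1 where B1: "B1 \<in> bases_of G s1" "I1 \<subseteq> B1" using bases_of_ex[OF s1 _ I(2)] I X by blast
    obtain B2 where B2: "B2 \<in> bases_of G s2" "I2 \<subseteq> B2" using bases_of_ex[OF s2 _ I(3)] I X by blast
    have "B1 \<union> B2 \<in> ?U" using B1 B2 by blast
    then show "\<exists>Y\<in>?U. X \<subseteq> Y" using B1 B2 I by blast
  qed
  have fle: "\<And>Y. Y \<subseteq> G \<Longrightarrow> ?f Y \<le> ?f G" using rankfD(3)[OF f] by blast
  show ?thesis
  proof
    show "union_bases (bases_of G s1) (bases_of G s2) \<subseteq> bases_of G ?f"
    proof
      fix X assume "X \<in> union_bases (bases_of G s1) (bases_of G s2)"
      then have XU: "X \<in> ?U" and mx: "\<not> (\<exists>Y\<in>?U. X \<subset> Y)" unfolding union_bases_def Let_def by auto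
      have XG: "X \<subseteq> G" and fX: "?f X = card X" using Uind[OF XU] by auto
      have fXf: "finite X" using XG fG finite_subset by blast
      have "card X = ?f G"
      proof (rule ccontr)
        assume ne: "card X \<noteq> ?f G"
        have "\<exists>y\<in>G - X. ?f (insert y X) = card (insert y X)"
        proof (rule ccontr)
          assume na: "\<not> (\<exists>y\<in>G - X. ?f (insert y X) = card (insert y X))"
          have "\<forall>y\<in>G - X. ?f (insert y X) = ?f X"
          proof
            fix y assume y: "y \<in> G - X"
            have "?f (insert y X) \<le> ?f X + 1" using rankf_insert[OF f XG] y by blast
            moreover have "?f X \<le> ?f (insert y X)" using rankfD(3)[OF f, of X "insert y X"] XG y by auto
            moreover have "card (insert y X) = card X + 1" using y fXf by simp
            ultimately show "?f (insert y X) = ?f X" using na y fX by force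
          qed
          then have "?f (X \<union> (G - X)) = ?f X" using rankf_closure[OF f XG, of "G - X"] by blast
          moreover have "X \<union> (G - X) = G" using XG by blast
          ultimately show False using ne fX by simp
        qed
        then obtain y where y: "y \<in> G - X" "?f (insert y X) = card (insert y X)" by blast
        then obtain Y where "Y \<in> ?U" "insert y X \<subseteq> Y" using indU[of "insert y X"] XG by blast
        then show False using mx y by blast
      qed
      then show "X \<in> bases_of G ?f" unfolding bases_of_def using XG fX by simp
    qed
  next
    show "bases_of G ?f \<subseteq> union_bases (bases_of G s1) (bases_of G s2)"
    proof
      fix X assume X: "X \<in> bases_of G ?f"
      then have XG: "X \<subseteq> G" and fX: "?f X = card X" and cX: "card X = ?f G" unfolding bases_of_def by auto
      obtain Y where Y: "Y \<in> ?U" "X \<subseteq> Y" using indU[OF XG fX] by blast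
      have YG: "Y \<subseteq> G" and fY: "?f Y = card Y" using Uind[OF Y(1)] by auto
      have fYf: "finite Y" using YG fG finite_subset by blast
      have "card Y \<le> card X" using fle[OF YG] fY cX by simp
      then have XY: "X = Y" using Y(2) fYf by (metis card_seteq)
      have "\<not> (\<exists>Y'\<in>?U. X \<subset> Y')"
      proof
        assume "\<exists>Y'\<in>?U. X \<subset> Y'"
        then obtain Y' where Y': "Y' \<in> ?U" "X \<subset> Y'" by blast
        have Y'G: "Y' \<subseteq> G" and fY': "?f Y' = card Y'" using Uind[OF Y'(1)] by auto
        have "finite Y'" using Y'G fG finite_subset by blast
        then have "card X < card Y'" using Y'(2) psubset_card_mono by blast
        then show False using fle[OF Y'G] fY' cX by simp
      qed
      then show "X \<in> union_bases (bases_of G s1) (bases_of G s2)"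
        unfolding union_bases_def Let_def using Y XY by auto
    qed
  qed
qed

lemma dual_bases_of:
  assumes r: "rankf G r"
  shows "dual_bases G (bases_of G r) = bases_of G (dualr G r)"
proof
  have fG: "finite G" using rankfD(1)[OF r] .
  show "dual_bases G (bases_of G r) \<subseteq> bases_of G (dualr G r)"
  proof
    fix Y assume "Y \<in> dual_bases G (bases_of G r)"
    then obtain B where B: "B \<in> bases_of G r" "Y = G - B" unfolding dual_bases_def by auto
    then have BG: "B \<subseteq> G" "r B = card B" "card B = r G" unfolding bases_of_def by auto
    have GY: "G - Y = B" using B BG by auto
    have cY: "card Y = card G - card B" using B BG fG by (simp add: card_Diff_subset finite_subset)
    have "r G \<le> card G" using rankfD(2)[OF r] by blast
    then show "Y \<in> bases_of G (dualr G r)" unfolding bases_of_def dualr_def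
      using GY cY BG B rankf_empty[OF r] by auto
  qed
next
  have fG: "finite G" using rankfD(1)[OF r] .
  show "bases_of G (dualr G r) \<subseteq> dual_bases G (bases_of G r)"
  proof
    fix Y assume Y: "Y \<in> bases_of G (dualr G r)"
    then have YG: "Y \<subseteq> G" and d1: "card Y + r (G - Y) - r G = card Y" and d2: "card Y = card G + r {} - r G"
      unfolding bases_of_def dualr_def by auto
    have le: "r G \<le> card Y + r (G - Y)" using rankf_le_compl[OF r YG] .
    have m: "r (G - Y) \<le> r G" using rankfD(3)[OF r, of "G - Y" G] by auto
    have rB: "r (G - Y) = r G" using d1 le m by linarith
    have rGc: "r G \<le> card G" using rankfD(2)[OF r] by blast
    have cB: "card (G - Y) = card G - card Y" using YG fG by (simp add: card_Diff_subset finite_subset)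
    have "card (G - Y) = r G" using cB d2 rankf_empty[OF r] rGc by simp
    then have "G - Y \<in> bases_of G r" unfolding bases_of_def using rB by auto
    moreover have "Y = G - (G - Y)" using YG by auto
    ultimately show "Y \<in> dual_bases G (bases_of G r)" unfolding dual_bases_def by blast
  qed
qed

lemma alg:
  fixes R n a q :: nat
  assumes h: "R * (n - a) \<le> n * q" and "R \<le> a + q" "a \<le> n" "R \<le> n"
  shows "a * (n - R) \<le> n * (a + q - R)"
proof -
  have h': "int R * (int n - int a) \<le> int n * int q" using h assms(3) by (metis of_nat_diff of_nat_le_iff of_nat_mult)
  have "int a * (int n - int R) \<le> int n * (int a + int q - int R)"
    using h' by (simp add: algebra_simps)
  then show ?thesis using assms by (metis of_nat_add of_nat_diff of_nat_le_iff of_nat_mult)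
qed

lemma dualr_E: "rankf G r \<Longrightarrow> dualr G r G = card G - r G"
  unfolding dualr_def by (simp add: rankf_empty)

lemma dualr_T: "dualr G r T = card T + r (G - T) - r G"
  unfolding dualr_def by simp

lemma ud_ineq:
  assumes m: "matroid E \<B>" and u: "uniformly_dense E \<B>" and A: "A \<subseteq> E"
  shows "mrank \<B> E * card A \<le> card E * mrank \<B> A"
proof (cases "A = {} \<or> mrank \<B> E = 0")
  case True
  then show ?thesis by auto
next
  case False
  then have An: "A \<noteq> {}" and rE: "mrank \<B> E \<noteq> 0" by auto
  have d: "density \<B> A \<le> density \<B> E" using u A An unfolding uniformly_dense_def by blast
  have rA: "mrank \<B> A \<noteq> 0"
  proof
    assume "mrank \<B> A = 0"
    then have "density \<B> A = \<infinity>" unfolding density_def by simp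
    then show False using d rE unfolding density_def by simp
  qed
  have "real (card A) / real (mrank \<B> A) \<le> real (card E) / real (mrank \<B> E)"
    using d rA rE unfolding density_def by simp
  then have "real (card A) * real (mrank \<B> E) \<le> real (card E) * real (mrank \<B> A)"
    using rA rE by (simp add: field_simps)
  then have "real (mrank \<B> E * card A) \<le> real (card E * mrank \<B> A)" by (simp add: mult.commute)
  then show ?thesis by linarith
qed

lemma dual_ud:
  assumes r: "rankf E r" and h: "\<And>A. A \<subseteq> E \<Longrightarrow> r E * card A \<le> card E * r A" and T: "T \<subseteq> E"
  shows "card T * dualr E r E \<le> card E * dualr E r T"
proof -
  have fE: "finite E" using rankfD(1)[OF r] .
  let ?n = "card E" and ?R = "r E" and ?a = "card T" and ?q = "r (E - T)"
  have dE: "dualr E r E = ?n - ?R" unfolding dualr_def using rankf_empty[OF r] by simp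
  have dT: "dualr E r T = ?a + ?q - ?R" unfolding dualr_def by simp
  have cET: "card (E - T) = ?n - ?a" using T fE by (simp add: card_Diff_subset finite_subset)
  have hh: "?R * (?n - ?a) \<le> ?n * ?q" using h[of "E - T"] cET by auto
  have "?R \<le> ?a + ?q" using rankf_le_compl[OF r T] .
  moreover have "?a \<le> ?n" using T fE by (simp add: card_mono)
  moreover have "?R \<le> ?n" using rankfD(2)[OF r] by blast
  ultimately show ?thesis using alg[OF hh] dE dT by simp
qed

lemma union_dense:
  assumes s1: "rankf E s1" and s2: "rankf E s2"
    and h1: "\<And>T. T \<subseteq> E \<Longrightarrow> card T * s1 E \<le> card E * s1 T"
    and h2: "\<And>T. T \<subseteq> E \<Longrightarrow> card T * s2 E \<le> card E * s2 T"
    and C: "C \<subseteq> E"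
  shows "unionr s1 s2 E * card C \<le> card E * unionr s1 s2 C"
proof -
  have fE: "finite E" using rankfD(1)[OF s1] .
  have fC: "finite C" using C fE finite_subset by blast
  let ?f = "unionr s1 s2" and ?n = "card E"
  obtain T where T: "T \<subseteq> C" "?f C = card (C - T) + s1 T + s2 T" using unionr_ex[OF fC] by blast
  have TE: "T \<subseteq> E" using T C by auto
  have rs: "?f E \<le> s1 E + s2 E" using unionr_le[OF fE order_refl, of s1 s2] by simp
  have rn: "?f E \<le> ?n" using rankfD(2)[OF rankf_union[OF s1 s2]] by blast
  have cC: "card C = card (C - T) + card T" using T fC
    by (metis add.commute card_Diff_subset card_mono finite_subset le_add_diff_inverse)
  have "?f E * card C = ?f E * card (C - T) + ?f E * card T" using cC by (simp add: algebra_simps)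
  also have "\<dots> \<le> ?n * card (C - T) + (s1 E + s2 E) * card T"
    using rn rs by (intro add_mono mult_right_mono) auto
  also have "\<dots> = ?n * card (C - T) + card T * s1 E + card T * s2 E" by (simp add: algebra_simps)
  also have "\<dots> \<le> ?n * card (C - T) + ?n * s1 T + ?n * s2 T"
    using h1[OF TE] h2[OF TE] by (intro add_mono) auto
  also have "\<dots> = ?n * ?f C" using T by (simp add: algebra_simps)
  finally show ?thesis .
qed

theorem corollary2p8:
  fixes E :: "'a set" and \<B>1 \<B>2 :: "'a set set"
  assumes "matroid E \<B>1" and "matroid E \<B>2"
    and "loopless E \<B>1" and "loopless E \<B>2"
    and "uniformly_dense E \<B>1" and "uniformly_dense E \<B>2"
  shows "matroid E (inter_bases E \<B>1 \<B>2) \<and> uniformly_dense E (inter_bases E \<B>1 \<B>2)"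
proof -
  let ?r1 = "mrank \<B>1" and ?r2 = "mrank \<B>2"
  have r1: "rankf E ?r1" and r2: "rankf E ?r2" using matroid_rankf assms(1,2) by blast+
  have b1: "\<B>1 = bases_of E ?r1" and b2: "\<B>2 = bases_of E ?r2" using matroid_bases_of assms(1,2) by blast+
  let ?s1 = "dualr E ?r1" and ?s2 = "dualr E ?r2"
  have s1: "rankf E ?s1" and s2: "rankf E ?s2" using rankf_dual r1 r2 by blast+
  let ?f = "unionr ?s1 ?s2"
  have f: "rankf E ?f" using rankf_union[OF s1 s2] .
  let ?rM = "dualr E ?f"
  have rM: "rankf E ?rM" using rankf_dual[OF f] .
  have eq: "inter_bases E \<B>1 \<B>2 = bases_of E ?rM"
    unfolding inter_bases_def
    by (subst b1, subst b2, simp only: dual_bases_of[OF r1] dual_bases_of[OF r2] union_bases_of[OF s1 s2] dual_bases_of[OF f])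
  have fE: "finite E" using rankfD(1)[OF r1] .
  let ?n = "card E"
  have h1: "\<And>T. T \<subseteq> E \<Longrightarrow> card T * ?s1 E \<le> ?n * ?s1 T"
    using dual_ud[OF r1] ud_ineq[OF assms(1) assms(5)] by blast
  have h2: "\<And>T. T \<subseteq> E \<Longrightarrow> card T * ?s2 E \<le> ?n * ?s2 T"
    using dual_ud[OF r2] ud_ineq[OF assms(2) assms(6)] by blast
  have ud: "uniformly_dense E (bases_of E ?rM)"
    unfolding uniformly_dense_def
  proof (intro allI impI)
    fix A assume A: "A \<subseteq> E \<and> A \<noteq> {}"
    have mA: "mrank (bases_of E ?rM) A = ?rM A" using mrank_bases_of[OF rM] A by blast
    have mE: "mrank (bases_of E ?rM) E = ?rM E" using mrank_bases_of[OF rM] by blast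
    show "density (bases_of E ?rM) A \<le> density (bases_of E ?rM) E"
    proof (cases "?rM E = 0")
      case True
      then show ?thesis unfolding density_def using mE by simp
    next
      case False
      let ?R = "?f E" and ?a = "card A" and ?q = "?f (E - A)"
      have dE: "?rM E = ?n - ?R" by (rule dualr_E[OF f])
      have dA: "?rM A = ?a + ?q - ?R" by (rule dualr_T)
      have cEA: "card (E - A) = ?n - ?a" using A fE by (meson card_Diff_subset finite_subset)
      have hh: "?R * (?n - ?a) \<le> ?n * ?q" using union_dense[OF s1 s2 h1 h2, of "E - A"] cEA by auto
      have c1: "?R \<le> ?a + ?q" using rankf_le_compl[OF f] A by blast
      have c2: "?a \<le> ?n" using A fE by (simp add: card_mono)
      have c3: "?R \<le> ?n" using rankfD(2)[OF f] by blast
      have key: "?a * ?rM E \<le> ?n * ?rM A" using alg[OF hh c1 c2 c3] dE dA by simp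
      have "finite A" using A fE finite_subset by blast
      then have apos: "?a > 0" using A by (simp add: card_gt_0_iff)
      have rEpos: "?rM E > 0" using False by simp
      have "0 < ?a * ?rM E" using apos rEpos by simp
      then have rApos: "?rM A > 0" using key by (metis gr0I mult_0_right not_le)
      have "real ?a * real (?rM E) \<le> real ?n * real (?rM A)" using key
        by (metis of_nat_le_iff of_nat_mult)
      then have "real ?a / real (?rM A) \<le> real ?n / real (?rM E)"
        using rApos rEpos by (simp add: field_simps)
      then show ?thesis unfolding density_def using mA mE rApos rEpos by simp
    qed
  qed
  show ?thesis using bases_of_matroid[OF rM] ud eq by simp
qed

end
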